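(* Let $\rho:\mathbb{R}^3\to\mathbb{R}_{\ge 0}$ be a differentiable probability density supported in the closed unit ball of $\mathbb{R}^3$, and let $B=\sup_{\mathbf{x}}|\nabla\rho(\mathbf{x})|$. Let $I_1,I_2$ be the tomographic projections of $\rho$ along unit vectors $\mathbf{u}$ and $\mathbf{v}$ respectively, and let $\measuredangle(\mathbf{u},\mathbf{v})\in[0,\pi]$ be the angle between them. Then $$L_2^R(I_1,I_2)\le 2\sqrt{\pi}\,B\,\measuredangle(\mathbf{u},\mathbf{v}).$$
   Context: For $R\in\mathrm{SO}(3)$ define $(R\rho)(\mathbf{x})=\rho(R^T\mathbf{x})$. The tomographic projection of $\rho$ along a unit vector $\mathbf{u}$ is the function on $\mathbb{R}^2$ given by $I(x,y)=\int_{\mathbb{R}}(R\rho)(x,y,z)\,dz$, where $R\in\mathrm{SO}(3)$ is any rotation with $R\mathbf{u}=(0,0,-1)$; different choices of $R$ change $I$ only by an in-plane rotation. For $g\in\mathrm{SO}(2)$ and a function $I$ on $\mathbb{R}^2$ let $(gI)(\mathbf{w})=I(g^T\mathbf{w})$. The rotationally-invariant Euclidean distance is $L_2^R(I_1,I_2)=\min_{g\in\mathrm{SO}(2)}\|I_1-gI_2\|_{L^2(\mathbb{R}^2)}$. *)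

theory Defs
  imports "HOL-Analysis.Analysis"
begin

definition grad :: "(real^3 \<Rightarrow> real) \<Rightarrow> real^3 \<Rightarrow> real^3" where
  "grad f x = (\<chi> i. frechet_derivative f (at x) (axis i 1))"

definition rot3 :: "real^3^3 \<Rightarrow> (real^3 \<Rightarrow> real) \<Rightarrow> real^3 \<Rightarrow> real" where
  "rot3 R \<rho> x = \<rho> (transpose R *v x)"

definition rot2 :: "real^2^2 \<Rightarrow> (real^2 \<Rightarrow> real) \<Rightarrow> real^2 \<Rightarrow> real" where
  "rot2 g I w = I (transpose g *v w)"

definition proj :: "real^3^3 \<Rightarrow> (real^3 \<Rightarrow> real) \<Rightarrow> real^2 \<Rightarrow> real" where
  "proj R \<rho> w = (LINT z|lborel. rot3 R \<rho> (vector [w$1, w$2, z]))"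

definition is_tomo_proj :: "(real^3 \<Rightarrow> real) \<Rightarrow> real^3 \<Rightarrow> (real^2 \<Rightarrow> real) \<Rightarrow> bool" where
  "is_tomo_proj \<rho> u I \<longleftrightarrow>
     (\<exists>R. rotation_matrix R \<and> R *v u = vector [0, 0, -1] \<and> I = proj R \<rho>)"

definition L2norm2 :: "(real^2 \<Rightarrow> real) \<Rightarrow> real" where
  "L2norm2 f = sqrt (LINT w|lborel. (f w)\<^sup>2)"

definition L2R :: "(real^2 \<Rightarrow> real) \<Rightarrow> (real^2 \<Rightarrow> real) \<Rightarrow> real" where
  "L2R I1 I2 = (INF g\<in>{g. rotation_matrix g}. L2norm2 (\<lambda>w. I1 w - rot2 g I2 w))"

definition vangle :: "real^3 \<Rightarrow> real^3 \<Rightarrow> real" where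
  "vangle u v = arccos (u \<bullet> v)"

end

theory Submission
  imports Defs
begin


lemma lin_grad:
  fixes D :: "real^3 \<Rightarrow> real"
  assumes "linear D"
  shows "D h = h \<bullet> (\<chi> i. D (axis i 1))"
proof -
  have "D h = D (\<Sum>i\<in>UNIV. h$i *\<^sub>R axis i 1)"
    using basis_expansion[of h] by (simp add: scalar_mult_eq_scaleR)
  also have "\<dots> = (\<Sum>i\<in>UNIV. h$i * D (axis i 1))"
    using assms by (simp add: linear_sum linear_scale)
  also have "\<dots> = h \<bullet> (\<chi> i. D (axis i 1))"
    by (simp add: inner_vec_def)
  finally show ?thesis .
qed

lemma lipschitz_rho:
  fixes \<rho> :: "real^3 \<Rightarrow> real"
  assumes diff: "\<And>x. \<rho> differentiable (at x)"
    and bdd: "bdd_above (range (\<lambda>x. norm (grad \<rho> x)))"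
  shows "\<bar>\<rho> x - \<rho> y\<bar> \<le> (SUP x. norm (grad \<rho> x)) * norm (x - y)"
proof -
  let ?B = "(SUP x. norm (grad \<rho> x))"
  have "norm (\<rho> x - \<rho> y) \<le> ?B * norm (x - y)"
  proof (rule differentiable_bound[where S=UNIV and f'="\<lambda>x. frechet_derivative \<rho> (at x)"])
    fix z :: "real^3"
    show "(\<rho> has_derivative frechet_derivative \<rho> (at z)) (at z within UNIV)"
      using diff frechet_derivative_works by auto
    have lin: "linear (frechet_derivative \<rho> (at z))"
      using diff linear_frechet_derivative by blast
    show "onorm (frechet_derivative \<rho> (at z)) \<le> ?B"
    proof (rule onorm_le)
      fix h
      have "norm (frechet_derivative \<rho> (at z) h) = \<bar>h \<bullet> grad \<rho> z\<bar>"
        using lin_grad[OF lin, of h] by (simp add: grad_def)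
      also have "\<dots> \<le> norm h * norm (grad \<rho> z)"
        using Cauchy_Schwarz_ineq2 by blast
      also have "\<dots> \<le> ?B * norm h"
        using cSUP_upper[OF _ bdd, of z] by (simp add: mult.commute mult_left_mono)
      finally show "norm (frechet_derivative \<rho> (at z) h) \<le> ?B * norm h" .
    qed
  qed auto
  then show ?thesis by simp
qed



definition Hm :: "real^3 \<Rightarrow> real^3^3" where
  "Hm p = (\<chi> i j. 2 * p$i * p$j - (if i = j then 1 else 0))"

lemma Hm_apply: "Hm p *v x = (2 * (p \<bullet> x)) *\<^sub>R p - x"
  by (simp add: Hm_def vec_eq_iff matrix_vector_mult_def inner_vec_def sum_3 forall_3 algebra_simps)

lemma Hm_transpose: "transpose (Hm p) = Hm p"
  by (simp add: Hm_def vec_eq_iff transpose_def mult.commute)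

lemma Hm_invol: assumes "norm p = 1" shows "Hm p ** Hm p = mat 1"
proof -
  have pp: "p \<bullet> p = 1" using assms by (simp add: norm_eq_1)
  show ?thesis
    unfolding matrix_eq
  proof
    fix x
    have "p \<bullet> ((2 * (p \<bullet> x)) *\<^sub>R p - x) = p \<bullet> x"
      by (simp add: inner_diff_right pp)
    then show "(Hm p ** Hm p) *v x = mat 1 *v x"
      by (simp add: matrix_vector_mul_assoc[symmetric] Hm_apply)
  qed
qed

lemma orth_norm: "orthogonal_matrix (A::real^'n^'n) \<Longrightarrow> norm (A *v x) = norm x"
  by (metis (no_types, lifting) dot_matrix_vector_mul matrix_vector_mul_lid
    norm_eq orthogonal_matrix_def orthogonal_matrix_id)

lemma Hm_rot: assumes "norm p = 1" shows "rotation_matrix (Hm p)"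
proof -
  have pp: "p$1 * p$1 + p$2 * p$2 + p$3 * p$3 = 1"
    using assms by (simp add: norm_eq_1 inner_vec_def sum_3)
  have "det (Hm p) = 2 * (p$1 * p$1 + p$2 * p$2 + p$3 * p$3) - 1"
    by (simp add: Hm_def det_3 algebra_simps)
  then have "det (Hm p) = 1" using pp by simp
  moreover have "orthogonal_matrix (Hm p)"
    using Hm_invol[OF assms] by (simp add: orthogonal_matrix Hm_transpose)
  ultimately show ?thesis by (simp add: rotation_matrix_def)
qed

lemma gram3:
  fixes p v x :: "real^3"
  shows "(p\<bullet>p)*(v\<bullet>v)*(x\<bullet>x) + 2*(p\<bullet>x)*(v\<bullet>x)*(p\<bullet>v) - (p\<bullet>p)*(v\<bullet>x)^2 - (v\<bullet>v)*(p\<bullet>x)^2 - (x\<bullet>x)*(p\<bullet>v)^2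
     = (p$1*(v$2*x$3 - v$3*x$2) - p$2*(v$1*x$3 - v$3*x$1) + p$3*(v$1*x$2 - v$2*x$1))^2"
  unfolding inner_vec_def sum_3 inner_real_def by algebra

lemma aux_gram: "(0::real) \<le> 1*1*N + 2*a*b*c - 1*b^2 - 1*a^2 - N*c^2 \<Longrightarrow> a^2 + b^2 - 2*a*b*c \<le> (1 - c^2)*N"
  by (simp add: algebra_simps)

lemma gram_ineq:
  fixes p v x :: "real^3"
  assumes "norm p = 1" "norm v = 1"
  shows "(p\<bullet>x)^2 + (v\<bullet>x)^2 - 2*(p\<bullet>x)*(v\<bullet>x)*(p\<bullet>v) \<le> (1 - (p\<bullet>v)^2) * (norm x)^2"
proof -
  have pp: "p\<bullet>p = 1" and vv: "v\<bullet>v = 1" using assms by (auto simp: norm_eq_1)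
  have xx: "x \<bullet> x = (norm x)^2" by (simp add: power2_norm_eq_inner)
  show ?thesis
    apply (rule aux_gram)
    using gram3[of p v x, unfolded pp vv xx] by (metis zero_le_power2)
qed

lemma pv_le1: assumes "norm p = 1" "norm (v::real^3) = 1" shows "(p\<bullet>v)^2 \<le> 1"
proof -
  have "\<bar>p\<bullet>v\<bar> \<le> 1" using Cauchy_Schwarz_ineq2[of p v] assms by simp
  thus ?thesis by (simp add: abs_square_le_1)
qed

lemma Hm_pair_bound:
  fixes p v x :: "real^3"
  assumes "norm p = 1" "norm v = 1"
  shows "norm (Hm v *v (Hm p *v x) - x) \<le> 2 * sqrt (1 - (p\<bullet>v)^2) * norm x"
proof -
  have "Hm v *v (Hm p *v x) - x = Hm v *v (Hm p *v x - Hm v *v x)"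
    by (simp add: matrix_vector_mult_diff_distrib matrix_vector_mul_assoc Hm_invol[OF assms(2)])
  hence "norm (Hm v *v (Hm p *v x) - x) = norm (Hm p *v x - Hm v *v x)"
    using Hm_rot[OF assms(2)] by (simp add: orth_norm rotation_matrix_def)
  also have "Hm p *v x - Hm v *v x = 2 *\<^sub>R ((p\<bullet>x) *\<^sub>R p - (v\<bullet>x) *\<^sub>R v)"
    by (simp add: Hm_apply algebra_simps)
  finally have e: "norm (Hm v *v (Hm p *v x) - x) = 2 * norm ((p\<bullet>x) *\<^sub>R p - (v\<bullet>x) *\<^sub>R v)" by simp
  have "(norm ((p\<bullet>x) *\<^sub>R p - (v\<bullet>x) *\<^sub>R v))^2 = (p\<bullet>x)^2 + (v\<bullet>x)^2 - 2*(p\<bullet>x)*(v\<bullet>x)*(p\<bullet>v)"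
    unfolding power2_norm_eq_inner
    using assms by (simp add: inner_diff_left inner_diff_right norm_eq_1 inner_commute power2_eq_square algebra_simps)
  also have "\<dots> \<le> (sqrt (1 - (p\<bullet>v)^2) * norm x)^2"
    using gram_ineq[OF assms, of x] pv_le1[OF assms] by (simp add: power_mult_distrib)
  finally have "norm ((p\<bullet>x) *\<^sub>R p - (v\<bullet>x) *\<^sub>R v) \<le> sqrt (1 - (p\<bullet>v)^2) * norm x"
    by (rule power2_le_imp_le) (use pv_le1[OF assms] in simp)
  with e show ?thesis by simp
qed



lemma block_rot:
  fixes S :: "real^3^3"
  assumes rS: "rotation_matrix S" and fix3: "S *v vector [0,0,1] = vector [0,0,1]"
  shows "\<exists>g::real^2^2. rotation_matrix g \<and> (\<forall>w z. transpose S *v vector [w$1, w$2, z] =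
            vector [(transpose g *v w)$1, (transpose g *v w)$2, z])"
proof -
  have c3: "S$1$3 = 0" "S$2$3 = 0" "S$3$3 = 1"
    using fix3 by (auto simp: vec_eq_iff forall_3 matrix_vector_mult_def sum_3)
  have o1: "transpose S ** S = mat 1" and o2: "S ** transpose S = mat 1"
    using rS by (auto simp: rotation_matrix_def orthogonal_matrix_def)
  have e1: "S$1$1*S$1$1 + S$2$1*S$2$1 + S$3$1*S$3$1 = 1"
           "S$1$2*S$1$2 + S$2$2*S$2$2 + S$3$2*S$3$2 = 1"
           "S$1$1*S$1$2 + S$2$1*S$2$2 + S$3$1*S$3$2 = 0"
    using o1 by (auto simp: vec_eq_iff forall_3 matrix_matrix_mult_def transpose_def sum_3 mat_def)
  have e2: "S$3$1*S$3$1 + S$3$2*S$3$2 + S$3$3*S$3$3 = 1"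
    using o2 by (auto simp: vec_eq_iff forall_3 matrix_matrix_mult_def transpose_def sum_3 mat_def)
  have r3: "S$3$1 = 0" "S$3$2 = 0"
    using e2 c3 by (auto simp: add_nonneg_eq_0_iff)
  have dS: "det S = 1" using rS by (simp add: rotation_matrix_def)
  define g :: "real^2^2" where "g = (\<chi> i j. S $ (if i = 1 then 1 else 2) $ (if j = 1 then 1 else 2))"
  have g: "g$1$1 = S$1$1" "g$1$2 = S$1$2" "g$2$1 = S$2$1" "g$2$2 = S$2$2"
    by (simp_all add: g_def)
  have "transpose g ** g = mat 1"
    using e1 r3 by (simp add: vec_eq_iff forall_2 matrix_matrix_mult_def transpose_def sum_2 mat_def g mult.commute)
  moreover have "det g = 1"
    using dS c3 r3 by (simp add: det_2 det_3 g)
  ultimately have "rotation_matrix g"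
    by (simp add: rotation_matrix_def orthogonal_matrix)
  moreover have "\<forall>w z. transpose S *v vector [w$1, w$2, z] =
            vector [(transpose g *v w)$1, (transpose g *v w)$2, z]"
    using c3 r3 by (simp add: vec_eq_iff forall_3 matrix_vector_mult_def transpose_def sum_3 sum_2 g)
  ultimately show ?thesis by blast
qed



lemma norm_vec3: "(norm (vector [a, b, z] :: real^3))^2 = a^2 + b^2 + z^2"
  unfolding power2_norm_eq_inner by (simp add: inner_vec_def sum_3 power2_eq_square)

lemma vec3_split: "(vector [a, b, z] :: real^3) = vector [a, b, 0] + z *\<^sub>R axis 3 1"
  by (simp add: vec_eq_iff forall_3 axis_def)

lemma norm_vec3_ge: "\<bar>z\<bar> \<le> norm (vector [a, b, z] :: real^3)"
  using component_le_norm_cart[of "vector [a, b, z] :: real^3" 3] by simp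

lemma lint_ind: "(LINT z|lborel. c * indicator {-1..1::real} z) = 2 * (c::real)"
proof -
  have "(LINT z|lborel. c * indicator {-1..1::real} z) = c * (LINT z|lborel. indicator {-1..1::real} z)"
    by (rule integral_mult_right_zero)
  also have "(LINT z|lborel. indicator {-1..1::real} z) = measure lborel {-1..1::real}"
    by simp
  also have "measure lborel {-1..1::real} = 2"
    by (simp add: measure_def)
  finally show ?thesis by simp
qed

lemma line_int:
  fixes f :: "real^3 \<Rightarrow> real" and A :: "real^3^3"
  assumes A: "orthogonal_matrix A" and cont: "continuous_on UNIV f"
    and bd: "\<And>x. \<bar>f x\<bar> \<le> C" and supp: "\<And>x. norm x > 1 \<Longrightarrow> f x = 0"
  shows "integrable lborel (\<lambda>z. f (A *v vector [a, b, z]))"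
proof (rule Bochner_Integration.integrable_bound)
  show "integrable lborel (\<lambda>z::real. C * indicator {-1..1} z :: real)"
    by (intro integrable_mult_right integrable_real_indicator) simp_all
  have cz: "continuous_on UNIV (\<lambda>z::real. f (A *v vector [a, b, 0] + z *\<^sub>R (A *v axis 3 1)))"
    by (intro continuous_on_compose2[OF cont] continuous_intros) auto
  have eqz: "A *v vector [a, b, z] = A *v vector [a, b, 0] + z *\<^sub>R (A *v axis 3 1)" for z
  proof -
    have e: "(vector [a, b, z] :: real^3) = vector [a, b, 0] + z *\<^sub>R axis 3 1" by (rule vec3_split)
    show ?thesis by (simp only: e matrix_vector_right_distrib matrix_vector_mult_scaleR)
  qed
  have le: "(\<lambda>z. f (A *v vector [a, b, z])) = (\<lambda>z. f (A *v vector [a, b, 0] + z *\<^sub>R (A *v axis 3 1)))"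
    by (rule ext, rule arg_cong[where f=f], rule eqz)
  show "(\<lambda>z. f (A *v vector [a, b, z])) \<in> borel_measurable lborel"
    unfolding le using cz by (simp add: borel_measurable_continuous_onI)
  have C0: "0 \<le> C" using bd[of 0] by simp
  show "AE z in lborel. norm (f (A *v vector [a, b, z])) \<le> norm (C * indicator {-1..1} z)"
  proof (rule AE_I2)
    fix z :: real
    show "norm (f (A *v vector [a, b, z])) \<le> norm (C * indicator {-1..1} z)"
    proof (cases "\<bar>z\<bar> \<le> 1")
      case True
      then show ?thesis using bd C0 by (auto simp: indicator_def abs_le_iff)
    next
      case False
      then have "norm (A *v vector [a, b, z]) > 1"
        using norm_vec3_ge[of z a b] orth_norm[OF A] by simp
      then show ?thesis using supp by simp
    qed
  qed
qed

lemma line_diff_bound: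
  fixes f :: "real^3 \<Rightarrow> real" and A Q :: "real^3^3"
  assumes A: "orthogonal_matrix A" and Q: "orthogonal_matrix Q" and cont: "continuous_on UNIV f"
    and bd: "\<And>x. \<bar>f x\<bar> \<le> C" and supp: "\<And>x. norm x > 1 \<Longrightarrow> f x = 0"
    and lip: "\<And>x y. \<bar>f x - f y\<bar> \<le> B * norm (x - y)"
    and Qb: "\<And>x. norm (Q *v x - x) \<le> \<theta> * norm x"
    and B0: "0 \<le> B" and t0: "0 \<le> \<theta>"
  shows "\<bar>(LINT z|lborel. f (A *v vector [a, b, z])) - (LINT z|lborel. f ((Q ** A) *v vector [a, b, z]))\<bar>
          \<le> 2 * B * \<theta> * indicator (cball 0 1) (vector [a, b] :: real^2)"
proof -
  have QA: "orthogonal_matrix (Q ** A)" using A Q by (simp add: orthogonal_matrix_mul)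
  have i1: "integrable lborel (\<lambda>z. f (A *v vector [a, b, z]))" by (rule line_int[OF A cont bd supp])
  have i2: "integrable lborel (\<lambda>z. f ((Q ** A) *v vector [a, b, z]))" by (rule line_int[OF QA cont bd supp])
  have nv2: "norm (vector [a, b] :: real^2) ^ 2 = a^2 + b^2"
    unfolding power2_norm_eq_inner by (simp add: inner_vec_def sum_2 power2_eq_square)
  show ?thesis
  proof (cases "norm (vector [a, b] :: real^2) \<le> 1")
    case False
    have z: "norm (vector [a, b, z] :: real^3) > 1" for z
    proof -
      have "1 < norm (vector [a, b] :: real^2) ^ 2" using False
        by (metis not_le one_less_power zero_less_numeral)
      also have "\<dots> \<le> (norm (vector [a, b, z] :: real^3))^2" using nv2 norm_vec3 by simp
      finally have "1 < (norm (vector [a, b, z] :: real^3))^2" .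
      then show ?thesis
      proof (rule contrapos_pp)
        assume "\<not> 1 < norm (vector [a, b, z] :: real^3)"
        then show "\<not> 1 < (norm (vector [a, b, z] :: real^3))^2"
          by (simp add: not_less power_le_one)
      qed
    qed
    have "f (A *v vector [a, b, z]) = 0" "f ((Q ** A) *v vector [a, b, z]) = 0" for z
      using supp orth_norm[OF A] orth_norm[OF QA] z[of z] by auto
    then show ?thesis using B0 t0 by (simp add: indicator_def)
  next
    case True
    have pt: "\<bar>f (A *v vector [a, b, z]) - f ((Q ** A) *v vector [a, b, z])\<bar> \<le> B * \<theta> * indicator {-1..1} z" for z
    proof -
      let ?x = "A *v vector [a, b, z]"
      have e2: "(Q ** A) *v vector [a, b, z] = Q *v ?x" by (simp add: matrix_vector_mul_assoc)
      show ?thesis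
      proof (cases "norm ?x \<le> 1")
        case False
        then have "f ?x = 0" "f (Q *v ?x) = 0" using supp orth_norm[OF Q, of ?x] by auto
        then show ?thesis using e2 B0 t0 by (simp add: indicator_def)
      next
        case True
        then have "\<bar>z\<bar> \<le> 1" using norm_vec3_ge[of z a b] orth_norm[OF A] by simp
        have "\<bar>f ?x - f (Q *v ?x)\<bar> \<le> B * norm (Q *v ?x - ?x)"
          using lip[of ?x "Q *v ?x"] by (simp add: norm_minus_commute)
        also have "\<dots> \<le> B * (\<theta> * norm ?x)" using Qb B0 by (simp add: mult_left_mono)
        also have "\<dots> \<le> B * \<theta>"
        proof -
          have "\<theta> * norm ?x \<le> \<theta> * 1" using True t0 by (rule mult_left_mono)
          thus ?thesis using B0 by (simp add: mult_left_mono)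
        qed
        finally show ?thesis using e2 \<open>\<bar>z\<bar> \<le> 1\<close> by (simp add: indicator_def abs_le_iff)
      qed
    qed
    have "\<bar>(LINT z|lborel. f (A *v vector [a, b, z])) - (LINT z|lborel. f ((Q ** A) *v vector [a, b, z]))\<bar>
        = \<bar>LINT z|lborel. f (A *v vector [a, b, z]) - f ((Q ** A) *v vector [a, b, z])\<bar>"
      using i1 i2 by simp
    also have "\<dots> \<le> (LINT z|lborel. B * \<theta> * indicator {-1..1::real} z)"
    proof (rule Bochner_Integration.integral_abs_bound_integral)
      show "integrable lborel (\<lambda>z. f (A *v vector [a, b, z]) - f ((Q ** A) *v vector [a, b, z]))"
        by (rule Bochner_Integration.integrable_diff[OF i1 i2])
      show "integrable lborel (\<lambda>z. B * \<theta> * indicator {-1..1::real} z)"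
        by (intro integrable_mult_right integrable_real_indicator) simp_all
      show "\<bar>f (A *v vector [a, b, z]) - f ((Q ** A) *v vector [a, b, z])\<bar> \<le> B * \<theta> * indicator {-1..1::real} z" for z
        by (rule pt)
    qed
    also have "\<dots> = 2 * B * \<theta>" using lint_ind[of "B * \<theta>"] by (simp add: mult.assoc)
    finally have fin: "\<bar>(LINT z|lborel. f (A *v vector [a, b, z])) - (LINT z|lborel. f ((Q ** A) *v vector [a, b, z]))\<bar> \<le> 2 * B * \<theta>" .
    have "indicator (cball 0 1) (vector [a, b] :: real^2) = (1::real)"
      using True by (simp add: indicator_def mem_cball_0)
    with fin show ?thesis by (metis mult.right_neutral)
  qed
qed



lemma perp_exists: fixes v :: "real^3" shows "\<exists>p. norm p = 1 \<and> p \<bullet> v = 0"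
proof -
  define q :: "real^3" where "q = (if v$1 = 0 \<and> v$2 = 0 then axis 1 1 else vector [-v$2, v$1, 0])"
  have q0: "q \<noteq> 0"
    by (auto simp: q_def vec_eq_iff forall_3 axis_def)
  have qv: "q \<bullet> v = 0"
    by (auto simp: q_def inner_vec_def sum_3 axis_def)
  show ?thesis
    by (rule exI[of _ "q /\<^sub>R norm q"]) (simp add: q0 qv)
qed

lemma half_angle_bound:
  fixes c :: real assumes "-1 \<le> c" "c \<le> 1"
  shows "2 * sqrt ((1 - c) / 2) \<le> arccos c"
proof -
  let ?t = "arccos c"
  have t0: "0 \<le> ?t" using assms arccos_lbound by blast
  have ct: "cos ?t = c" using assms cos_arccos by blast
  have "cos ?t = 1 - 2 * sin (?t/2) ^ 2" using cos_double_sin[of "?t/2"] by simp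
  hence "(1 - c)/2 = sin (?t/2) ^ 2" using ct by simp
  hence "sqrt ((1 - c)/2) = \<bar>sin (?t/2)\<bar>" by simp
  also have "\<dots> \<le> \<bar>?t/2\<bar>" by (rule abs_sin_x_le_abs_x)
  finally show ?thesis using t0 by simp
qed

lemma choose_p:
  fixes u v :: "real^3"
  assumes u: "norm u = 1" and v: "norm v = 1"
  shows "\<exists>p. norm p = 1 \<and> (2 * (p \<bullet> v)) *\<^sub>R p = u + v \<and> 2 * sqrt (1 - (p\<bullet>v)^2) \<le> arccos (u \<bullet> v)"
proof -
  have uu: "u \<bullet> u = 1" and vv: "v \<bullet> v = 1" using u v by (auto simp: norm_eq_1)
  have cb: "\<bar>u \<bullet> v\<bar> \<le> 1" using Cauchy_Schwarz_ineq2[of u v] u v by simp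
  show ?thesis
  proof (cases "u + v = 0")
    case True
    then have "u = - v" by (simp add: add_eq_0_iff)
    then have c: "u \<bullet> v = -1" using vv by simp
    obtain p where p: "norm p = 1" "p \<bullet> v = 0" using perp_exists by blast
    have "2 \<le> pi" using pi_gt3 by simp
    then show ?thesis using p True c by (intro exI[of _ p]) simp
  next
    case False
    define s where "s = u + v"
    have s0: "s \<noteq> 0" using False s_def by simp
    have ss: "s \<bullet> s = 2 + 2 * (u \<bullet> v)"
      using uu vv by (simp add: s_def inner_add_left inner_add_right inner_commute)
    have sv: "s \<bullet> v = 1 + u \<bullet> v" using vv by (simp add: s_def inner_add_left)
    have ns: "norm s ^ 2 = 2 + 2 * (u \<bullet> v)" using ss by (simp add: power2_norm_eq_inner)
    have nsp: "norm s > 0" using s0 by simp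
    define p where "p = s /\<^sub>R norm s"
    have pn: "norm p = 1" using s0 by (simp add: p_def)
    have pv: "p \<bullet> v = (1 + u \<bullet> v) / norm s" by (simp add: p_def sv divide_inverse mult.commute)
    have "(2 * (p \<bullet> v)) *\<^sub>R p = (2 * (1 + u \<bullet> v) / norm s ^ 2) *\<^sub>R s"
      unfolding pv by (simp add: p_def power2_eq_square divide_inverse)
    also have "\<dots> = s"
    proof -
      have "norm s ^ 2 > 0" using nsp by simp
      moreover have "2 * (1 + u \<bullet> v) = norm s ^ 2" using ns by simp
      ultimately have "2 * (1 + u \<bullet> v) / norm s ^ 2 = 1" by (metis less_irrefl divide_self)
      thus ?thesis by (metis scaleR_one)
    qed
    finally have e1: "(2 * (p \<bullet> v)) *\<^sub>R p = u + v" by (simp add: s_def)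
    have "(p \<bullet> v)^2 = (1 + u \<bullet> v)^2 / (2 + 2 * (u \<bullet> v))"
      by (simp add: pv power_divide ns)
    also have "\<dots> = (1 + u \<bullet> v) / 2"
    proof -
      have "norm s ^ 2 > 0" using nsp by simp
      hence "2 + 2 * (u \<bullet> v) > 0" using ns by linarith
      thus ?thesis by (simp add: power2_eq_square field_simps)
    qed
    finally have "1 - (p \<bullet> v)^2 = (1 - u \<bullet> v)/2" by simp
    moreover have "2 * sqrt ((1 - u \<bullet> v)/2) \<le> arccos (u \<bullet> v)"
      using half_angle_bound[of "u \<bullet> v"] cb by (simp add: abs_le_iff)
    ultimately have "2 * sqrt (1 - (p\<bullet>v)^2) \<le> arccos (u \<bullet> v)" by metis
    then show ?thesis using pn e1 by blast
  qed
qed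



lemma rot_mul: "rotation_matrix A \<Longrightarrow> rotation_matrix B \<Longrightarrow> rotation_matrix (A ** (B::real^'n^'n))"
  by (simp add: rotation_matrix_def orthogonal_matrix_mul det_mul)

lemma rot_transpose: "rotation_matrix A \<Longrightarrow> rotation_matrix (transpose (A::real^'n^'n))"
  by (simp add: rotation_matrix_def)

lemma orth_inv: "orthogonal_matrix (R::real^'n^'n) \<Longrightarrow> transpose R *v (R *v x) = x"
  by (simp add: matrix_vector_mul_assoc orthogonal_matrix)

lemma mv_neg: "(A::real^'n^'m) *v (- x) = - (A *v x)"
  by (simp add: vec_eq_iff matrix_vector_mult_def sum_negf)

theorem proposition2:
  fixes \<rho> :: "real^3 \<Rightarrow> real" and u v :: "real^3" and I1 I2 :: "real^2 \<Rightarrow> real"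
  assumes diff: "\<And>x. \<rho> differentiable (at x)"
    and nonneg: "\<And>x. \<rho> x \<ge> 0"
    and integrable: "integrable lborel \<rho>"
    and prob: "(LINT x|lborel. \<rho> x) = 1"
    and supp: "\<And>x. norm x > 1 \<Longrightarrow> \<rho> x = 0"
    and bdd: "bdd_above (range (\<lambda>x. norm (grad \<rho> x)))"
    and u: "norm u = 1" and v: "norm v = 1"
    and I1: "is_tomo_proj \<rho> u I1" and I2: "is_tomo_proj \<rho> v I2"
  shows "L2R I1 I2 \<le> 2 * sqrt pi * (SUP x. norm (grad \<rho> x)) * vangle u v"
proof -
  define B where "B = (SUP x. norm (grad \<rho> x))"
  define \<theta> where "\<theta> = vangle u v"
  have B0: "0 \<le> B"
    unfolding B_def by (rule order_trans[OF norm_ge_zero cSUP_upper[OF UNIV_I bdd]])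
  have lip: "\<bar>\<rho> x - \<rho> y\<bar> \<le> B * norm (x - y)" for x y
    using lipschitz_rho[OF diff bdd] unfolding B_def by blast
  have cont: "continuous_on UNIV \<rho>"
    using diff differentiable_imp_continuous_within continuous_at_imp_continuous_on by blast
  have bd: "\<bar>\<rho> x\<bar> \<le> 3 * B" for x
  proof (cases "norm x > 1")
    case True thus ?thesis using supp B0 by simp
  next
    case False
    define x0 :: "real^3" where "x0 = 2 *\<^sub>R axis 1 1"
    have nx0: "norm x0 = 2" by (simp add: x0_def)
    hence "\<rho> x0 = 0" using supp by simp
    hence "\<bar>\<rho> x\<bar> \<le> B * norm (x - x0)" using lip[of x x0] by simp
    also have "\<dots> \<le> B * (norm x + norm x0)" using B0 norm_triangle_ineq4[of x x0] by (simp add: mult_left_mono)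
    also have "\<dots> \<le> B * 3" using B0 False nx0 by (simp add: mult_left_mono)
    finally show ?thesis by simp
  qed
  obtain R1 where R1: "rotation_matrix R1" "R1 *v u = vector [0, 0, -1]" "I1 = proj R1 \<rho>"
    using I1 unfolding is_tomo_proj_def by blast
  obtain R2 where R2: "rotation_matrix R2" "R2 *v v = vector [0, 0, -1]" "I2 = proj R2 \<rho>"
    using I2 unfolding is_tomo_proj_def by blast
  have oR1: "orthogonal_matrix R1" and oR2: "orthogonal_matrix R2"
    using R1 R2 by (auto simp: rotation_matrix_def)
  obtain p where p: "norm p = 1" "(2 * (p \<bullet> v)) *\<^sub>R p = u + v"
      "2 * sqrt (1 - (p\<bullet>v)^2) \<le> arccos (u \<bullet> v)"
    using choose_p[OF u v] by blast
  have t: "2 * sqrt (1 - (p\<bullet>v)^2) \<le> \<theta>" using p(3) by (simp add: \<theta>_def vangle_def)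
  have t0: "0 \<le> \<theta>" using t pv_le1[OF p(1) v] by (smt (verit) real_sqrt_ge_zero)
  define Q where "Q = Hm v ** Hm p"
  have oQ: "orthogonal_matrix Q" and rQ: "rotation_matrix Q"
    using Hm_rot[OF v] Hm_rot[OF p(1)] rot_mul unfolding Q_def rotation_matrix_def by blast+
  have Qb: "norm (Q *v x - x) \<le> \<theta> * norm x" for x
  proof -
    have "norm (Q *v x - x) \<le> 2 * sqrt (1 - (p\<bullet>v)^2) * norm x"
      using Hm_pair_bound[OF p(1) v, of x] by (simp add: Q_def matrix_vector_mul_assoc[symmetric])
    also have "\<dots> \<le> \<theta> * norm x" using t by (simp add: mult_right_mono)
    finally show ?thesis .
  qed
  have vv: "v \<bullet> v = 1" using v by (simp add: norm_eq_1)
  have QTv: "transpose Q *v v = u"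
  proof -
    have "transpose Q = Hm p ** Hm v" by (simp add: Q_def matrix_transpose_mul Hm_transpose)
    moreover have "Hm v *v v = v" using vv by (simp add: Hm_apply scaleR_2)
    moreover have "Hm p *v v = u" using p(2) by (simp add: Hm_apply)
    ultimately show ?thesis by (simp add: matrix_vector_mul_assoc[symmetric])
  qed
  define e3 :: "real^3" where "e3 = vector [0, 0, 1]"
  have me3: "vector [0, 0, -1] = - e3" by (simp add: e3_def vec_eq_iff forall_3)
  have R2e3: "transpose R2 *v e3 = - v"
  proof -
    have "transpose R2 *v (R2 *v v) = v" by (rule orth_inv[OF oR2])
    hence "transpose R2 *v (- e3) = v" using R2(2) me3 by simp
    thus ?thesis by (simp add: mv_neg minus_equation_iff)
  qed
  have R1u: "R1 *v u = - e3" using R1(2) me3 by simp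
  define S where "S = (R1 ** transpose Q) ** transpose R2"
  have rS: "rotation_matrix S"
    unfolding S_def using R1(1) R2(1) rQ by (intro rot_mul rot_transpose)
  have Se3: "S *v vector [0, 0, 1] = vector [0, 0, 1]"
  proof -
    have "S *v e3 = R1 *v (transpose Q *v (transpose R2 *v e3))"
      by (simp only: S_def matrix_vector_mul_assoc matrix_mul_assoc)
    also have "\<dots> = e3" using R2e3 QTv R1u by (simp add: mv_neg)
    finally show ?thesis by (simp add: e3_def)
  qed
  obtain g :: "real^2^2" where g: "rotation_matrix g"
    and gS: "\<And>w z. transpose S *v vector [w$1, w$2, z] = vector [(transpose g *v w)$1, (transpose g *v w)$2, z]"
    using block_rot[OF rS Se3] by blast
  have key: "transpose R2 *v vector [(transpose g *v w)$1, (transpose g *v w)$2, z]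
      = (Q ** transpose R1) *v vector [w$1, w$2, z]" for w z
  proof -
    have "transpose R2 *v vector [(transpose g *v w)$1, (transpose g *v w)$2, z]
        = transpose R2 *v (R2 *v ((Q ** transpose R1) *v vector [w$1, w$2, z]))"
      unfolding gS[symmetric] by (simp add: S_def matrix_transpose_mul matrix_vector_mul_assoc)
    also have "\<dots> = (Q ** transpose R1) *v vector [w$1, w$2, z]" by (rule orth_inv[OF oR2])
    finally show ?thesis .
  qed
  define h where "h = (\<lambda>w. I1 w - rot2 g I2 w)"
  have hb: "\<bar>h w\<bar> \<le> 2 * B * \<theta> * indicator (cball 0 1) w" for w
  proof -
    have e1: "I1 w = (LINT z|lborel. \<rho> (transpose R1 *v vector [w$1, w$2, z]))"
      by (simp only: R1(3) proj_def rot3_def)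
    have e2: "rot2 g I2 w = (LINT z|lborel. \<rho> ((Q ** transpose R1) *v vector [w$1, w$2, z]))"
      by (simp only: R2(3) proj_def rot3_def rot2_def key)
    have ww: "(vector [w$1, w$2] :: real^2) = w" by (simp add: vec_eq_iff forall_2)
    have "\<bar>h w\<bar> \<le> 2 * B * \<theta> * indicator (cball 0 1) (vector [w$1, w$2] :: real^2)"
      unfolding h_def e1 e2
      by (rule line_diff_bound[OF _ oQ cont bd supp lip Qb B0 t0]) (use oR1 in simp)
    thus ?thesis by (simp only: ww)
  qed
  have c0: "0 \<le> 2 * B * \<theta>" using B0 t0 by simp
  have h2: "(h w)^2 \<le> (2 * B * \<theta>)^2 * indicator (cball 0 1) w" for w
  proof (cases "w \<in> cball 0 1")
    case True
    hence "\<bar>h w\<bar> \<le> 2 * B * \<theta>" using hb[of w] by simp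
    hence "(h w)^2 \<le> (2 * B * \<theta>)^2" by (metis abs_le_square_iff abs_of_nonneg c0)
    thus ?thesis using True by simp
  next
    case False
    thus ?thesis using hb[of w] by simp
  qed
  have meas: "measure lborel (cball (0::real^2) 1) = pi"
    using circle_area[of 1 "0::real^2"] content_cball_conv_ball[of "0::real^2" 1] by simp
  have int_ind: "integrable lborel (\<lambda>w::real^2. (2 * B * \<theta>)^2 * indicator (cball 0 1) w)"
    by (intro integrable_mult_right integrable_real_indicator)
       (simp, metis emeasure_bounded_finite bounded_cball)
  have "(LINT w|lborel. (h w)^2) \<le> (LINT w|lborel. (2 * B * \<theta>)^2 * indicator (cball 0 1) (w::real^2))"
    by (rule Bochner_Integration.integral_mono'[OF int_ind]) (use h2 in auto)
  also have "\<dots> = (2 * B * \<theta>)^2 * pi"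
    using meas by (simp add: integral_mult_right_zero)
  finally have L: "(LINT w|lborel. (h w)^2) \<le> (2 * B * \<theta>)^2 * pi" .
  have "L2norm2 h \<le> sqrt ((2 * B * \<theta>)^2 * pi)"
    unfolding L2norm2_def using L by simp
  also have "\<dots> = 2 * sqrt pi * B * \<theta>"
    using c0 by (simp add: real_sqrt_mult)
  finally have L2: "L2norm2 h \<le> 2 * sqrt pi * B * \<theta>" .
  have bb: "bdd_below ((\<lambda>g. L2norm2 (\<lambda>w. I1 w - rot2 g I2 w)) ` {g. rotation_matrix g})"
  proof (rule bdd_belowI[of _ 0])
    fix y assume "y \<in> (\<lambda>g. L2norm2 (\<lambda>w. I1 w - rot2 g I2 w)) ` {g. rotation_matrix g}"
    then show "0 \<le> y" by (auto simp: L2norm2_def intro!: integral_nonneg_AE)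
  qed
  have "L2R I1 I2 \<le> L2norm2 h"
    unfolding L2R_def h_def by (rule cINF_lower[OF bb]) (simp add: g)
  with L2 show ?thesis by (simp add: B_def \<theta>_def)
qed
end
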